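(* Let $X$ be a complex vector space equipped with an inner product $\langle\cdot,\cdot\rangle'$ with induced norm $\|x\|'=\sqrt{\langle x,x\rangle'}$. Suppose that for each $\alpha\in(0,1]$ we are given a map $\langle\cdot,\cdot\rangle_\alpha : X\times X\to\mathbb{C}$ and real constants $A_\alpha,B_\alpha$ with $0<A_\alpha\le B_\alpha<\infty$ such that for all $x,y\in X$ and all $\alpha\in(0,1]$, \[ A_\alpha\,|\langle x,y\rangle'| \le |\langle x,y\rangle_\alpha| \le B_\alpha\,|\langle x,y\rangle'|. \] For $x\in X$ put $\|x\|_\alpha=\sqrt{\langle x,x\rangle_\alpha}$ (any complex square root), so $|\|x\|_\alpha^2|=|\langle x,x\rangle_\alpha|$. Then for all $x,y\in X$ and all $\alpha\in(0,1]$: (i) (Fuzzy Cauchy–Schwarz) $\displaystyle |\langle x,y\rangle_\alpha|\le \frac{B_\alpha}{A_\alpha}\,\big|\|x\|_\alpha\|y\|_\alpha\big|$; (ii) (Fuzzy parallelogram inequality) \[ \frac{2A_\alpha}{B_\alpha}\big(|\|x\|_\alpha^2|+|\|y\|_\alpha^2|\big)\le |\|x+y\|_\alpha^2|+|\|x-y\|_\alpha^2|\le \frac{2B_\alpha}{A_\alpha}\big(|\|x\|_\alpha^2|+|\|y\|_\alpha^2|\big); \] (iii) (Fuzzy polarization inequality, real case) if $X$ is a real vector space and $\langle\cdot,\cdot\rangle'$ is a real inner product (the same bounds being assumed), then \[ |\|x+y\|_\alpha^2|\le \frac{B_\alpha}{A_\alpha}\big(4|\langle x,y\rangle_\alpha|+|\|x-y\|_\alpha^2|\big);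 \] (iv) (Fuzzy Bessel inequality) if $\{e_i\}_{i=1}^\infty$ is an orthonormal sequence in $X$ with respect to $\langle\cdot,\cdot\rangle'$, then \[ \sum_{i=1}^\infty |\langle x,e_i\rangle_\alpha|^2\le \frac{B_\alpha^2}{A_\alpha}\,|\|x\|_\alpha^2|. \]
   Context: The map $\langle\cdot,\cdot\rangle_\alpha$ satisfying the two-sided bound is the paper's (simplified) "fuzzy inner product" relative to the classical inner product $\langle\cdot,\cdot\rangle'$; $\|\cdot\|_\alpha$ is its induced fuzzy norm. *)

theory Defs
  imports "HOL-Analysis.Analysis"
begin

definition complex_inner_product ::
  "(complex \<Rightarrow> 'a::ab_group_add \<Rightarrow> 'a) \<Rightarrow> ('a \<Rightarrow> 'a \<Rightarrow> complex) \<Rightarrow> bool" where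
  "complex_inner_product sc ip \<longleftrightarrow>
     (\<forall>x y. ip x y = cnj (ip y x)) \<and>
     (\<forall>x y z. ip (x + y) z = ip x z + ip y z) \<and>
     (\<forall>c x y. ip (sc c x) y = c * ip x y) \<and>
     (\<forall>x. 0 \<le> Re (ip x x)) \<and>
     (\<forall>x. ip x x = 0 \<longrightarrow> x = 0)"

end

theory Submission
  imports Defs
begin

locale cip =
  fixes sc :: "complex \<Rightarrow> 'a::ab_group_add \<Rightarrow> 'a" and ip :: "'a \<Rightarrow> 'a \<Rightarrow> complex"
  assumes cip: "complex_inner_product sc ip"
begin

lemmas all5 = cip[unfolded complex_inner_product_def]
lemmas conj_sym = all5[THEN conjunct1, rule_format]
lemmas add_left = all5[THEN conjunct2, THEN conjunct1, rule_format]
lemmas scale_left = all5[THEN conjunct2, THEN conjunct2, THEN conjunct1, rule_format]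
lemmas pos = all5[THEN conjunct2, THEN conjunct2, THEN conjunct2, THEN conjunct1, rule_format]
lemmas defn = all5[THEN conjunct2, THEN conjunct2, THEN conjunct2, THEN conjunct2, rule_format]

lemma add_right: "ip z (x + y) = ip z x + ip z y"
proof -
  have "ip z (x + y) = cnj (ip (x + y) z)" by (rule conj_sym)
  also have "\<dots> = cnj (ip x z) + cnj (ip y z)" by (simp add: add_left)
  also have "\<dots> = ip z x + ip z y" using conj_sym[of z x] conj_sym[of z y] by simp
  finally show ?thesis .
qed
lemma scale_right: "ip x (sc c y) = cnj c * ip x y"
proof -
  have "ip x (sc c y) = cnj (ip (sc c y) x)" by (rule conj_sym)
  also have "\<dots> = cnj c * cnj (ip y x)" by (simp add: scale_left)
  also have "\<dots> = cnj c * ip x y" using conj_sym[of x y] by simp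
  finally show ?thesis .
qed
lemma zero_left: "ip 0 y = 0"
  using add_left[of 0 0 y] by simp
lemma zero_right: "ip y 0 = 0"
  using add_right[of y 0 0] by simp
lemma minus_left: "ip (- x) y = - ip x y"
proof -
  have "ip x y + ip (- x) y = 0" using add_left[of x "-x" y] zero_left by simp
  then show ?thesis by (metis add.commute eq_neg_iff_add_eq_0)
qed
lemma minus_right: "ip y (- x) = - ip y x"
proof -
  have "ip y x + ip y (- x) = 0" using add_right[of y x "-x"] zero_right by simp
  then show ?thesis by (metis add.commute eq_neg_iff_add_eq_0)
qed
lemma diff_left: "ip (x - y) z = ip x z - ip y z"
  using add_left[of x "-y" z] minus_left by simp
lemma diff_right: "ip z (x - y) = ip z x - ip z y"
  using add_right[of z x "-y"] minus_right by simp

lemma self_real: "ip x x = of_real (Re (ip x x))"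
proof -
  have "Im (cnj (ip x x)) = Im (ip x x)" by (metis conj_sym)
  then have "Im (ip x x) = 0" by simp
  then show ?thesis by (metis Re_complex_of_real Im_complex_of_real complex_eqI)
qed
lemma cmod_self: "cmod (ip x x) = Re (ip x x)"
  by (metis self_real norm_of_real pos abs_of_nonneg)

lemma sum_left: "finite S \<Longrightarrow> ip (sum f S) y = (\<Sum>i\<in>S. ip (f i) y)"
  by (induction S rule: finite_induct) (auto simp: zero_left add_left)
lemma sum_right: "finite S \<Longrightarrow> ip y (sum f S) = (\<Sum>i\<in>S. ip y (f i))"
  by (induction S rule: finite_induct) (auto simp: zero_right add_right)

lemma cs: "(cmod (ip x y))\<^sup>2 \<le> Re (ip x x) * Re (ip y y)"
proof (cases "ip y y = 0")
  case True
  then have "y = 0" by (rule defn)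
  then show ?thesis by (simp add: zero_right)
next
  case False
  define r where "r = Re (ip y y)"
  have yy: "ip y y = of_real r" unfolding r_def by (rule self_real)
  have r1: "r \<ge> 0" unfolding r_def by (rule pos)
  have r2: "r \<noteq> 0" using False yy by auto
  have rpos: "r > 0" using r1 r2 by simp
  define a where "a = ip x y"
  define t where "t = a / of_real r"
  have yx: "ip y x = cnj a" using conj_sym[of y x] a_def by simp
  have "ip (x - sc t y) (x - sc t y) = ip x x - cnj t * a - t * cnj a + t * cnj t * ip y y"
    by (simp add: diff_left diff_right scale_left scale_right a_def yx algebra_simps)
  also have "\<dots> = ip x x - of_real ((cmod a)\<^sup>2 / r)"
  proof -
    have n: "of_real ((cmod a)\<^sup>2 / r) = a * cnj a / of_real r"
      by (simp only: of_real_divide complex_norm_square)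
    have r0: "(of_real r :: complex) \<noteq> 0" using rpos by simp
    show ?thesis unfolding n yy t_def using r0 by (simp add: field_simps)
  qed
  finally have "0 \<le> Re (ip x x) - (cmod a)\<^sup>2 / r" using pos[of "x - sc t y"] by simp
  then show ?thesis using rpos by (simp add: a_def r_def field_simps mult.commute)
qed

lemma cs': "cmod (ip x y) \<le> sqrt (Re (ip x x)) * sqrt (Re (ip y y))"
  by (metis cs real_sqrt_le_iff real_sqrt_mult real_sqrt_abs abs_norm_cancel)

lemma para: "ip (x + y) (x + y) + ip (x - y) (x - y) = 2 * ip x x + 2 * ip y y"
  by (simp add: add_left add_right diff_left diff_right algebra_simps)

lemma bessel:
  fixes e :: "nat \<Rightarrow> 'a" and n :: nat
  assumes on: "\<And>i j. ip (e i) (e j) = (if i = j then 1 else 0)"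
  shows "(\<Sum>i<n. (cmod (ip x (e i)))\<^sup>2) \<le> Re (ip x x)"
proof -
  define c where "c i = ip x (e i)" for i
  define S where "S = (\<Sum>i<n. sc (c i) (e i))"
  have gen: "ip S z = (\<Sum>i<n. c i * ip (e i) z)" for z
    unfolding S_def by (simp add: sum_left[OF finite_lessThan] scale_left)
  have Sj: "ip S (e j) = c j" if "j < n" for j
  proof -
    have "ip S (e j) = (\<Sum>i<n. c i * ip (e i) (e j))" by (rule gen)
    also have "\<dots> = (\<Sum>i<n. if i = j then c i else 0)" by (rule sum.cong) (auto simp: on)
    also have "\<dots> = c j" using that by simp
    finally show ?thesis .
  qed
  have sq: "c i * cnj (c i) = of_real ((cmod (c i))\<^sup>2)" for i
    by (rule complex_norm_square[symmetric])
  have xS: "ip x S = of_real (\<Sum>i<n. (cmod (c i))\<^sup>2)"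
  proof -
    have "ip x S = (\<Sum>i<n. cnj (c i) * ip x (e i))"
      unfolding S_def by (simp add: sum_right[OF finite_lessThan] scale_right)
    also have "\<dots> = (\<Sum>i<n. of_real ((cmod (c i))\<^sup>2))"
      by (rule sum.cong) (simp_all only: c_def[symmetric] sq[symmetric] mult.commute)
    finally show ?thesis by simp
  qed
  have Sx: "ip S x = of_real (\<Sum>i<n. (cmod (c i))\<^sup>2)"
    using xS conj_sym[of S x] by simp
  have SS: "ip S S = of_real (\<Sum>i<n. (cmod (c i))\<^sup>2)"
  proof -
    have "ip S S = (\<Sum>i<n. c i * ip (e i) S)" by (rule gen)
    also have "\<dots> = (\<Sum>i<n. c i * cnj (c i))"
      by (rule sum.cong) (auto simp: conj_sym[of "e _" S] Sj)
    also have "\<dots> = (\<Sum>i<n. of_real ((cmod (c i))\<^sup>2))"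
      by (rule sum.cong) (simp_all only: sq)
    finally show ?thesis by simp
  qed
  have "ip (x - S) (x - S) = ip x x - of_real (\<Sum>i<n. (cmod (c i))\<^sup>2)"
    by (simp add: diff_left diff_right xS Sx SS)
  then show ?thesis using pos[of "x - S"] by (simp add: c_def)
qed

end

theorem mainTheorem3:
  fixes sc :: "complex \<Rightarrow> 'a::ab_group_add \<Rightarrow> 'a"
    and ip :: "'a \<Rightarrow> 'a \<Rightarrow> complex"
    and fip :: "real \<Rightarrow> 'a \<Rightarrow> 'a \<Rightarrow> complex"
    and nrm :: "real \<Rightarrow> 'a \<Rightarrow> complex"
    and A B :: "real \<Rightarrow> real"
  assumes vs: "vector_space sc"
    and ip: "complex_inner_product sc ip"
    and AB: "\<And>\<alpha>. \<alpha> \<in> {0<..1} \<Longrightarrow> 0 < A \<alpha> \<and> A \<alpha> \<le> B \<alpha>"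
    and bounds: "\<And>\<alpha> x y. \<alpha> \<in> {0<..1} \<Longrightarrow>
        A \<alpha> * cmod (ip x y) \<le> cmod (fip \<alpha> x y) \<and> cmod (fip \<alpha> x y) \<le> B \<alpha> * cmod (ip x y)"
    and nrm: "\<And>\<alpha> x. (nrm \<alpha> x)\<^sup>2 = fip \<alpha> x x"
  shows
    \<comment> \<open>(i) fuzzy Cauchy--Schwarz\<close>
    "(\<forall>\<alpha>\<in>{0<..1}. \<forall>x y.
        cmod (fip \<alpha> x y) \<le> B \<alpha> / A \<alpha> * cmod (nrm \<alpha> x * nrm \<alpha> y))
   \<and> \<comment> \<open>(ii) fuzzy parallelogram inequality\<close>
     (\<forall>\<alpha>\<in>{0<..1}. \<forall>x y.
        2 * A \<alpha> / B \<alpha> * (cmod ((nrm \<alpha> x)\<^sup>2) + cmod ((nrm \<alpha> y)\<^sup>2))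
          \<le> cmod ((nrm \<alpha> (x + y))\<^sup>2) + cmod ((nrm \<alpha> (x - y))\<^sup>2)
      \<and> cmod ((nrm \<alpha> (x + y))\<^sup>2) + cmod ((nrm \<alpha> (x - y))\<^sup>2)
          \<le> 2 * B \<alpha> / A \<alpha> * (cmod ((nrm \<alpha> x)\<^sup>2) + cmod ((nrm \<alpha> y)\<^sup>2)))
   \<and> \<comment> \<open>(iii) fuzzy polarization inequality, real case\<close>
     (\<forall>(fipr :: real \<Rightarrow> 'b::real_inner \<Rightarrow> 'b \<Rightarrow> complex) (nrmr :: real \<Rightarrow> 'b \<Rightarrow> complex)
        (Ar :: real \<Rightarrow> real) Br.
        (\<forall>\<alpha>\<in>{0<..1}. 0 < Ar \<alpha> \<and> Ar \<alpha> \<le> Br \<alpha>) \<longrightarrow>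
        (\<forall>\<alpha>\<in>{0<..1}. \<forall>x y. Ar \<alpha> * \<bar>x \<bullet> y\<bar> \<le> cmod (fipr \<alpha> x y)
                              \<and> cmod (fipr \<alpha> x y) \<le> Br \<alpha> * \<bar>x \<bullet> y\<bar>) \<longrightarrow>
        (\<forall>\<alpha> x. (nrmr \<alpha> x)\<^sup>2 = fipr \<alpha> x x) \<longrightarrow>
        (\<forall>\<alpha>\<in>{0<..1}. \<forall>x y.
           cmod ((nrmr \<alpha> (x + y))\<^sup>2)
             \<le> Br \<alpha> / Ar \<alpha> * (4 * cmod (fipr \<alpha> x y) + cmod ((nrmr \<alpha> (x - y))\<^sup>2))))
   \<and> \<comment> \<open>(iv) fuzzy Bessel inequality\<close>
     (\<forall>e :: nat \<Rightarrow> 'a. (\<forall>i j. ip (e i) (e j) = (if i = j then 1 else 0)) \<longrightarrow>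
        (\<forall>\<alpha>\<in>{0<..1}. \<forall>x.
           summable (\<lambda>i. (cmod (fip \<alpha> x (e i)))\<^sup>2)
         \<and> (\<Sum>i. (cmod (fip \<alpha> x (e i)))\<^sup>2) \<le> (B \<alpha>)\<^sup>2 / A \<alpha> * cmod ((nrm \<alpha> x)\<^sup>2)))"
proof -
  interpret cip sc ip by (rule cip.intro) (rule ip)
  have N: "cmod ((nrm a x)\<^sup>2) = cmod (fip a x x)" for a x by (simp add: nrm)
  have P1: "\<forall>\<alpha>\<in>{0<..1}. \<forall>x y.
        cmod (fip \<alpha> x y) \<le> B \<alpha> / A \<alpha> * cmod (nrm \<alpha> x * nrm \<alpha> y)"
  proof (intro ballI allI)
    fix a x y assume a: "a \<in> {0<..1::real}"
    have A: "0 < A a" "A a \<le> B a" using AB[OF a] by auto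
    have sx: "sqrt (A a * Re (ip x x)) \<le> cmod (nrm a x)" for x
    proof -
      have "A a * Re (ip x x) \<le> (cmod (nrm a x))\<^sup>2"
        using bounds[OF a, of x x] by (simp add: cmod_self norm_power[symmetric] nrm)
      then show ?thesis by (simp add: real_le_lsqrt)
    qed
    have "cmod (fip a x y) \<le> B a * cmod (ip x y)" using bounds[OF a] by (rule conjunct2)
    also have "\<dots> \<le> B a * (sqrt (Re (ip x x)) * sqrt (Re (ip y y)))"
      using A cs' by (intro mult_left_mono) auto
    also have "\<dots> = B a / A a * (sqrt (A a * Re (ip x x)) * sqrt (A a * Re (ip y y)))"
    proof -
      have "sqrt (A a * Re (ip x x)) * sqrt (A a * Re (ip y y))
          = sqrt (A a * A a) * (sqrt (Re (ip x x)) * sqrt (Re (ip y y)))"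
        by (simp add: real_sqrt_mult)
      also have "\<dots> = A a * (sqrt (Re (ip x x)) * sqrt (Re (ip y y)))"
        using A by (simp add: real_sqrt_abs2)
      finally show ?thesis using A by simp
    qed
    also have "\<dots> \<le> B a / A a * (cmod (nrm a x) * cmod (nrm a y))"
      using A sx by (intro mult_left_mono mult_mono) (auto simp: pos)
    finally show "cmod (fip a x y) \<le> B a / A a * cmod (nrm a x * nrm a y)" by (simp add: norm_mult)
  qed
  have P2: "\<forall>\<alpha>\<in>{0<..1}. \<forall>x y.
        2 * A \<alpha> / B \<alpha> * (cmod ((nrm \<alpha> x)\<^sup>2) + cmod ((nrm \<alpha> y)\<^sup>2))
          \<le> cmod ((nrm \<alpha> (x + y))\<^sup>2) + cmod ((nrm \<alpha> (x - y))\<^sup>2)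
      \<and> cmod ((nrm \<alpha> (x + y))\<^sup>2) + cmod ((nrm \<alpha> (x - y))\<^sup>2)
          \<le> 2 * B \<alpha> / A \<alpha> * (cmod ((nrm \<alpha> x)\<^sup>2) + cmod ((nrm \<alpha> y)\<^sup>2))"
  proof (intro ballI allI)
    fix a x y assume a: "a \<in> {0<..1::real}"
    have A: "0 < A a" "A a \<le> B a" using AB[OF a] by auto
    have b: "A a * Re (ip z z) \<le> cmod ((nrm a z)\<^sup>2) \<and> cmod ((nrm a z)\<^sup>2) \<le> B a * Re (ip z z)" for z
      using bounds[OF a, of z z] by (simp add: N cmod_self)
    have pr: "Re (ip (x+y) (x+y)) + Re (ip (x-y) (x-y)) = 2 * Re (ip x x) + 2 * Re (ip y y)"
      using arg_cong[OF para[of x y], of Re] by simp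
    have px: "0 \<le> Re (ip x x)" "0 \<le> Re (ip y y)" by (rule pos)+
    define nx where "nx = Re (ip x x)"
    define ny where "ny = Re (ip y y)"
    define np where "np = Re (ip (x+y) (x+y))"
    define nm where "nm = Re (ip (x-y) (x-y))"
    define Fx where "Fx = cmod ((nrm a x)\<^sup>2)"
    define Fy where "Fy = cmod ((nrm a y)\<^sup>2)"
    define Fp where "Fp = cmod ((nrm a (x+y))\<^sup>2)"
    define Fm where "Fm = cmod ((nrm a (x-y))\<^sup>2)"
    have h: "A a * nx \<le> Fx" "Fx \<le> B a * nx" "A a * ny \<le> Fy" "Fy \<le> B a * ny"
       "A a * np \<le> Fp" "Fp \<le> B a * np" "A a * nm \<le> Fm" "Fm \<le> B a * nm"
      using b unfolding nx_def ny_def np_def nm_def Fx_def Fy_def Fp_def Fm_def by auto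
    have pr': "np + nm = 2 * nx + 2 * ny" using pr by (simp add: nx_def ny_def np_def nm_def)
    have "2 * A a / B a * (Fx + Fy) \<le> 2 * A a / B a * (B a * nx + B a * ny)"
      using A h by (intro mult_left_mono) auto
    also have "\<dots> = A a * (np + nm)" using A pr' by (simp add: field_simps)
    also have "\<dots> \<le> Fp + Fm" using h by (simp add: algebra_simps)
    finally have l: "2 * A a / B a * (Fx + Fy) \<le> Fp + Fm" .
    have "Fp + Fm \<le> B a * (np + nm)" using h by (simp add: algebra_simps)
    also have "\<dots> = 2 * B a / A a * (A a * nx + A a * ny)" using A pr' by (simp add: field_simps)
    also have "\<dots> \<le> 2 * B a / A a * (Fx + Fy)"
      using A h by (intro mult_left_mono) auto
    finally have u: "Fp + Fm \<le> 2 * B a / A a * (Fx + Fy)" .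
    show "2 * A a / B a * (cmod ((nrm a x)\<^sup>2) + cmod ((nrm a y)\<^sup>2))
          \<le> cmod ((nrm a (x + y))\<^sup>2) + cmod ((nrm a (x - y))\<^sup>2)
      \<and> cmod ((nrm a (x + y))\<^sup>2) + cmod ((nrm a (x - y))\<^sup>2)
          \<le> 2 * B a / A a * (cmod ((nrm a x)\<^sup>2) + cmod ((nrm a y)\<^sup>2))"
      using l u unfolding Fx_def Fy_def Fp_def Fm_def by (rule conjI)
  qed
  have P3: "\<forall>(fipr :: real \<Rightarrow> 'b::real_inner \<Rightarrow> 'b \<Rightarrow> complex) (nrmr :: real \<Rightarrow> 'b \<Rightarrow> complex)
        (Ar :: real \<Rightarrow> real) Br.
        (\<forall>\<alpha>\<in>{0<..1}. 0 < Ar \<alpha> \<and> Ar \<alpha> \<le> Br \<alpha>) \<longrightarrow>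
        (\<forall>\<alpha>\<in>{0<..1}. \<forall>x y. Ar \<alpha> * \<bar>x \<bullet> y\<bar> \<le> cmod (fipr \<alpha> x y)
                              \<and> cmod (fipr \<alpha> x y) \<le> Br \<alpha> * \<bar>x \<bullet> y\<bar>) \<longrightarrow>
        (\<forall>\<alpha> x. (nrmr \<alpha> x)\<^sup>2 = fipr \<alpha> x x) \<longrightarrow>
        (\<forall>\<alpha>\<in>{0<..1}. \<forall>x y.
           cmod ((nrmr \<alpha> (x + y))\<^sup>2)
             \<le> Br \<alpha> / Ar \<alpha> * (4 * cmod (fipr \<alpha> x y) + cmod ((nrmr \<alpha> (x - y))\<^sup>2)))"
  proof (intro allI impI ballI)
    fix fipr :: "real \<Rightarrow> 'b::real_inner \<Rightarrow> 'b \<Rightarrow> complex" and nrmr :: "real \<Rightarrow> 'b \<Rightarrow> complex"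
      and Ar Br :: "real \<Rightarrow> real" and a and x y :: 'b
    assume AB': "\<forall>\<alpha>\<in>{0<..1}. 0 < Ar \<alpha> \<and> Ar \<alpha> \<le> Br \<alpha>"
      and bd: "\<forall>\<alpha>\<in>{0<..1}. \<forall>x y. Ar \<alpha> * \<bar>x \<bullet> y\<bar> \<le> cmod (fipr \<alpha> x y)
                              \<and> cmod (fipr \<alpha> x y) \<le> Br \<alpha> * \<bar>x \<bullet> y\<bar>"
      and nr: "\<forall>\<alpha> x. (nrmr \<alpha> x)\<^sup>2 = fipr \<alpha> x x"
      and a: "a \<in> {0<..1::real}"
    have A: "0 < Ar a" "Ar a \<le> Br a" using AB' a by auto
    have e: "(x + y) \<bullet> (x + y) = 4 * (x \<bullet> y) + (x - y) \<bullet> (x - y)"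
      by (simp add: inner_add_left inner_add_right inner_diff_left inner_diff_right inner_commute)
    have "cmod ((nrmr a (x + y))\<^sup>2) = cmod (fipr a (x+y) (x+y))" using nr by simp
    also have "\<dots> \<le> Br a * \<bar>(x + y) \<bullet> (x + y)\<bar>" using bd[rule_format, OF a, of "x+y" "x+y"] by (rule conjunct2)
    also have "\<dots> = Br a * (4 * (x \<bullet> y) + (x - y) \<bullet> (x - y))" by (simp add: e[symmetric])
    also have "\<dots> \<le> Br a * (4 * \<bar>x \<bullet> y\<bar> + \<bar>(x - y) \<bullet> (x - y)\<bar>)"
      using A by (intro mult_left_mono) auto
    also have "\<dots> = Br a / Ar a * (4 * (Ar a * \<bar>x \<bullet> y\<bar>) + Ar a * \<bar>(x - y) \<bullet> (x - y)\<bar>)"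
      using A by (simp add: field_simps)
    also have "\<dots> \<le> Br a / Ar a * (4 * cmod (fipr a x y) + cmod (fipr a (x-y) (x-y)))"
      using A bd[rule_format, OF a, of x y, THEN conjunct1] bd[rule_format, OF a, of "x-y" "x-y", THEN conjunct1]
      by (intro mult_left_mono add_mono) auto
    also have "\<dots> = Br a / Ar a * (4 * cmod (fipr a x y) + cmod ((nrmr a (x - y))\<^sup>2))"
      using nr by simp
    finally show "cmod ((nrmr a (x + y))\<^sup>2)
             \<le> Br a / Ar a * (4 * cmod (fipr a x y) + cmod ((nrmr a (x - y))\<^sup>2))" .
  qed
  have P4: "\<forall>e :: nat \<Rightarrow> 'a. (\<forall>i j. ip (e i) (e j) = (if i = j then 1 else 0)) \<longrightarrow>
        (\<forall>\<alpha>\<in>{0<..1}. \<forall>x.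
           summable (\<lambda>i. (cmod (fip \<alpha> x (e i)))\<^sup>2)
         \<and> (\<Sum>i. (cmod (fip \<alpha> x (e i)))\<^sup>2) \<le> (B \<alpha>)\<^sup>2 / A \<alpha> * cmod ((nrm \<alpha> x)\<^sup>2))"
  proof (intro allI impI ballI)
    fix e :: "nat \<Rightarrow> 'a" and a x
    assume on: "\<forall>i j. ip (e i) (e j) = (if i = j then 1 else 0)" and a: "a \<in> {0<..1::real}"
    have A: "0 < A a" "A a \<le> B a" using AB[OF a] by auto
    have bes: "(\<Sum>i<n. (cmod (ip x (e i)))\<^sup>2) \<le> Re (ip x x)" for n
      by (rule bessel) (simp add: on)
    have s1: "summable (\<lambda>i. (cmod (ip x (e i)))\<^sup>2)"
      by (rule summableI_nonneg_bounded[where x="Re (ip x x)"]) (simp_all add: bes)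
    have s2: "summable (\<lambda>i. (B a)\<^sup>2 * (cmod (ip x (e i)))\<^sup>2)" using s1 by (rule summable_mult)
    have le: "(cmod (fip a x (e i)))\<^sup>2 \<le> (B a)\<^sup>2 * (cmod (ip x (e i)))\<^sup>2" for i
    proof -
      have "cmod (fip a x (e i)) \<le> B a * cmod (ip x (e i))" using bounds[OF a] by (rule conjunct2)
      then have "(cmod (fip a x (e i)))\<^sup>2 \<le> (B a * cmod (ip x (e i)))\<^sup>2"
        by (intro power_mono) auto
      then show ?thesis by (simp add: power_mult_distrib)
    qed
    have s: "summable (\<lambda>i. (cmod (fip a x (e i)))\<^sup>2)"
      by (rule summable_comparison_test'[where N=0, OF s2]) (simp add: le)
    have "(\<Sum>i. (cmod (fip a x (e i)))\<^sup>2) \<le> (\<Sum>i. (B a)\<^sup>2 * (cmod (ip x (e i)))\<^sup>2)"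
      by (rule suminf_le[OF le s s2])
    also have "\<dots> = (B a)\<^sup>2 * (\<Sum>i. (cmod (ip x (e i)))\<^sup>2)" using s1 by (rule suminf_mult)
    also have "\<dots> \<le> (B a)\<^sup>2 * Re (ip x x)"
      by (rule mult_left_mono[OF suminf_le_const[OF s1 bes]]) simp
    also have "\<dots> = (B a)\<^sup>2 / A a * (A a * Re (ip x x))" using A by simp
    also have "\<dots> \<le> (B a)\<^sup>2 / A a * cmod ((nrm a x)\<^sup>2)"
    proof (rule mult_left_mono)
      show "A a * Re (ip x x) \<le> cmod ((nrm a x)\<^sup>2)"
        using bounds[OF a, of x x, THEN conjunct1] by (simp add: N cmod_self)
      show "0 \<le> (B a)\<^sup>2 / A a" using A by simp
    qed
    finally have fin: "(\<Sum>i. (cmod (fip a x (e i)))\<^sup>2) \<le> (B a)\<^sup>2 / A a * cmod ((nrm a x)\<^sup>2)" .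
    show "summable (\<lambda>i. (cmod (fip a x (e i)))\<^sup>2)
         \<and> (\<Sum>i. (cmod (fip a x (e i)))\<^sup>2) \<le> (B a)\<^sup>2 / A a * cmod ((nrm a x)\<^sup>2)" by (rule conjI[OF s fin])
  qed
  show ?thesis by (rule conjI[OF P1 conjI[OF P2 conjI[OF P3 P4]]])
qed

end
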